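(* Let $k$ be a positive integer. Suppose $(x_i)_{i\ge0}$ is a sequence of integers such that $x_0=1$, $2k\mid x_i$ for all $i\ge1$, and for each $i\ge1$, $4k\mid x_i$ if and only if $i$ is not a power of two. Then for every $n\in\mathbb{N}$, the number $(2k)^{-n}\det[x_{i+j}]_{0\le i,j\le n}$ is an odd integer.
   Context: Powers of two are $1,2,4,8,\ldots$. $\det[x_{i+j}]_{0\le i,j\le n}$ denotes the determinant of the $(n+1)\times(n+1)$ Hankel matrix with $(i,j)$-entry $x_{i+j}$. *)

theory Defs
  imports "Jordan_Normal_Form.Determinant"
begin

definition is_power_of_two :: "nat \<Rightarrow> bool" where
  "is_power_of_two i \<longleftrightarrow> (\<exists>m::nat. i = 2 ^ m)"

definition hankel_mat :: "(nat \<Rightarrow> int) \<Rightarrow> nat \<Rightarrow> int mat" where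
  "hankel_mat x n = mat (Suc n) (Suc n) (\<lambda>(i, j). x (i + j))"

end

theory Submission imports Defs begin
definition goodf :: "nat \<Rightarrow> (nat \<Rightarrow> nat) \<Rightarrow> bool" where
  "goodf n p \<longleftrightarrow> (\<forall>i\<in>{1..n}. p i \<in> {1..n} \<and> is_power_of_two (i + p i)) \<and> inj_on p {1..n}"

lemma exists_t: "n \<ge> 1 \<Longrightarrow> \<exists>t. 2^t \<le> n \<and> n < (2::nat)^(Suc t)"
proof (induction n)
  case 0 then show ?case by simp
next
  case (Suc n)
  show ?case
  proof (cases "n = 0")
    case True then show ?thesis by (intro exI[of _ 0]) simp
  next
    case False
    then obtain t where t: "2^t \<le> n" "n < (2::nat)^(Suc t)" using Suc by auto
    show ?thesis
    proof (cases "Suc n < 2^Suc t")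
      case True then show ?thesis using t by (intro exI[of _ t]) simp
    next
      case False
      then have "Suc n = 2^Suc t" using t by simp
      then show ?thesis by (intro exI[of _ "Suc t"]) simp
    qed
  qed
qed

lemma pow2_mid:
  assumes "is_power_of_two s" "(2::nat)^t < s" "s < 2^(Suc (Suc t))"
  shows "s = 2^Suc t"
proof -
  obtain u where u: "s = 2^u" using assms(1) unfolding is_power_of_two_def by auto
  have "t < u" using assms(2) u by (metis power_strict_increasing_iff one_less_numeral_iff semiring_norm(76))
  moreover have "u < Suc (Suc t)" using assms(3) u by (metis power_strict_increasing_iff one_less_numeral_iff semiring_norm(76))
  ultimately have "u = Suc t" by simp
  then show ?thesis using u by simp
qed

lemma goodf_top:
  assumes g: "goodf n p" and t: "2^t \<le> n" "n < (2::nat)^(Suc t)"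
    and j: "j \<in> {2^Suc t - n..n}"
  shows "p j = 2^Suc t - j"
proof -
  let ?P = "(2::nat)^Suc t"
  have P2: "?P = 2 * 2^t" by simp
  have A: "p j = ?P - j" if "j \<in> {2^t..n}" for j
  proof -
    have j1: "j \<in> {1..n}" using that t by (auto intro: order.trans[rotated])
    have "p j \<in> {1..n}" "is_power_of_two (j + p j)" using g j1 unfolding goodf_def by auto
    moreover have "2^t < j + p j" "j + p j < 2^Suc (Suc t)" using that t \<open>p j \<in> {1..n}\<close> by auto
    ultimately have "j + p j = ?P" using pow2_mid by blast
    then show ?thesis by simp
  qed
  have B: "p (?P - j) = j" if "j \<in> {2^t..n}" for j
  proof -
    have j1: "j \<in> {1..n}" using that t by (auto intro: order.trans[rotated])
    have "p ` {1..n} = {1..n}" using g unfolding goodf_def by (intro endo_inj_surj) auto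
    then obtain i where i: "i \<in> {1..n}" "p i = j" using j1 by (metis imageE)
    have "is_power_of_two (i + j)" using g i unfolding goodf_def by auto
    moreover have "2^t < i + j" "i + j < 2^Suc (Suc t)" using that t i by auto
    ultimately have "i + j = ?P" using pow2_mid by blast
    then show ?thesis using i by (metis add_diff_cancel_right')
  qed
  show ?thesis
  proof (cases "2^t \<le> j")
    case True then show ?thesis using A j by auto
  next
    case False
    have "?P - j \<in> {2^t..n}" using False j t by auto
    from B[OF this] have "p (?P - (?P - j)) = ?P - j" .
    moreover have "?P - (?P - j) = j" using False t by auto
    ultimately show ?thesis by simp
  qed
qed

lemma goodf_unique: "goodf n p \<Longrightarrow> goodf n q \<Longrightarrow> i \<in> {1..n} \<Longrightarrow> p i = q i"
proof (induction n arbitrary: p q i rule: less_induct)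
  case (less n)
  then have "n \<ge> 1" by auto
  then obtain t where t: "2^t \<le> n" "n < (2::nat)^(Suc t)" using exists_t by blast
  let ?P = "(2::nat)^Suc t"
  define m where "m = ?P - n - 1"
  have mn: "m < n" using t unfolding m_def by simp
  show ?case
  proof (cases "i \<in> {?P - n..n}")
    case True
    then show ?thesis using goodf_top[OF less.prems(1) t True] goodf_top[OF less.prems(2) t True] by simp
  next
    case False
    then have im: "i \<in> {1..m}" using less.prems(3) unfolding m_def by auto
    have restr: "goodf m r" if r: "goodf n r" for r
    proof -
      have inj: "inj_on r {1..n}" using r unfolding goodf_def by auto
      have "r i' \<in> {1..m} \<and> is_power_of_two (i' + r i')" if i': "i' \<in> {1..m}" for i'
      proof -
        have i'n: "i' \<in> {1..n}" using i' mn by auto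
        have ri: "r i' \<in> {1..n}" "is_power_of_two (i' + r i')" using r i'n unfolding goodf_def by auto
        have "r i' \<le> m"
        proof (rule ccontr)
          assume "\<not> r i' \<le> m"
          then have rr: "r i' \<in> {?P - n..n}" using ri unfolding m_def by auto
          then have "?P - r i' \<in> {?P - n..n}" using t by auto
          from goodf_top[OF r t this] have "r (?P - r i') = ?P - (?P - r i')" .
          also have "\<dots> = r i'" using rr t by auto
          finally have "r (?P - r i') = r i'" .
          moreover have "?P - r i' \<in> {1..n}" using rr t by auto
          ultimately have "?P - r i' = i'" using inj i'n by (meson inj_onD)
          then show False using rr i' t unfolding m_def by auto
        qed
        then show ?thesis using ri by auto
      qed
      moreover have "inj_on r {1..m}" using inj mn by (auto intro: inj_on_subset)
      ultimately show ?thesis unfolding goodf_def by blast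
    qed
    show ?thesis using less.IH[OF mn restr[OF less.prems(1)] restr[OF less.prems(2)] im] .
  qed
qed

lemma goodf_exists: "\<exists>p. goodf n p"
proof (induction n rule: less_induct)
  case (less n)
  show ?case
  proof (cases "n = 0")
    case True then show ?thesis unfolding goodf_def by auto
  next
    case False
    then obtain t where t: "2^t \<le> n" "n < (2::nat)^(Suc t)" using exists_t[of n] by auto
    let ?P = "(2::nat)^Suc t"
    define m where "m = ?P - n - 1"
    have mn: "m < n" using t unfolding m_def by simp
    obtain q where q: "goodf m q" using less.IH[OF mn] by blast
    define p where "p i = (if i \<le> m then q i else ?P - i)" for i
    have "p i \<in> {1..n} \<and> is_power_of_two (i + p i)" if i: "i \<in> {1..n}" for i
    proof (cases "i \<le> m")
      case True
      then have "q i \<in> {1..m} \<and> is_power_of_two (i + q i)" using q i unfolding goodf_def by auto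
      then show ?thesis using True mn unfolding p_def by auto
    next
      case False
      then have "i + p i = ?P" "p i \<in> {1..n}" using i t unfolding p_def m_def by auto
      then show ?thesis unfolding is_power_of_two_def by metis
    qed
    moreover have "inj_on p {1..n}"
    proof (rule inj_onI)
      fix a b assume a: "a \<in> {1..n}" and b: "b \<in> {1..n}" and e: "p a = p b"
      have qm: "\<And>a. a \<in> {1..m} \<Longrightarrow> q a \<in> {1..m}" using q unfolding goodf_def by auto
      show "a = b"
      proof (cases "a \<le> m"; cases "b \<le> m")
        assume "a \<le> m" "b \<le> m"
        then show ?thesis using q a b e unfolding goodf_def p_def by (auto dest: inj_onD)
      next
        assume "a \<le> m" "\<not> b \<le> m"
        then show ?thesis using qm[of a] a b e t unfolding p_def m_def by auto
      next
        assume "\<not> a \<le> m" "b \<le> m"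
        then show ?thesis using qm[of b] a b e t unfolding p_def m_def by auto
      next
        assume "\<not> a \<le> m" "\<not> b \<le> m"
        then show ?thesis using a b e t unfolding p_def m_def by auto
      qed
    qed
    ultimately show ?thesis unfolding goodf_def by blast
  qed
qed

theorem lemma2p3:
  fixes k :: nat and x :: "nat \<Rightarrow> int"
  assumes "k > 0"
    and "x 0 = 1"
    and "\<And>i. i \<ge> 1 \<Longrightarrow> 2 * int k dvd x i"
    and "\<And>i. i \<ge> 1 \<Longrightarrow> (4 * int k dvd x i \<longleftrightarrow> \<not> is_power_of_two i)"
  shows "\<forall>n. \<exists>m::int. odd m \<and> det (hankel_mat x n) = (2 * int k) ^ n * m"
proof
  fix n
  define c where "c = 2 * int k"
  have cd: "\<And>i. i \<ge> 1 \<Longrightarrow> c dvd x i" using assms(3) unfolding c_def by blast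
  have c2d: "\<And>i. i \<ge> 1 \<Longrightarrow> (2 * c dvd x i \<longleftrightarrow> \<not> is_power_of_two i)"
    using assms(4) unfolding c_def by (simp add: mult.assoc)
  have ev: "even c" unfolding c_def by simp
  let ?N = "Suc n"
  let ?S = "{p. p permutes {0..<?N}}"
  define T where "T p = (\<Prod>i\<in>{0..<?N}. x (i + p i))" for p
  have det: "det (hankel_mat x n) = (\<Sum>p\<in>?S. signof p * T p)"
    unfolding det_def hankel_mat_def T_def by simp
  have fin: "finite ?S" by (simp add: finite_permutations)
  have split: "T p = x (p 0) * (\<Prod>i\<in>{1..n}. x (i + p i))" for p
  proof -
    have "{0..<?N} = insert 0 {1..n}" by auto
    then show ?thesis unfolding T_def by simp
  qed
  obtain p0 where p0: "goodf n p0" using goodf_exists by blast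
  define \<sigma> where "\<sigma> i = (if i \<in> {1..n} then p0 i else i)" for i
  have p0r: "\<And>i. i \<in> {1..n} \<Longrightarrow> p0 i \<in> {1..n} \<and> is_power_of_two (i + p0 i)"
    and p0i: "inj_on p0 {1..n}" using p0 unfolding goodf_def by auto
  have img: "p0 ` {1..n} = {1..n}" using p0r p0i by (intro endo_inj_surj) auto
  have sperm: "\<sigma> \<in> ?S"
  proof -
    have "bij_betw \<sigma> {0..<?N} {0..<?N}"
    proof (rule bij_betw_imageI)
      show "inj_on \<sigma> {0..<?N}"
      proof (rule inj_onI)
        fix a b assume a: "a \<in> {0..<?N}" and b: "b \<in> {0..<?N}" and e: "\<sigma> a = \<sigma> b"
        show "a = b"
        proof (cases "a = 0"; cases "b = 0")
          assume "a \<noteq> 0" "b \<noteq> 0"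
          then show ?thesis using a b e p0i unfolding \<sigma>_def by (auto dest: inj_onD)
        next
          assume "a = 0" "b \<noteq> 0" then show ?thesis using b e p0r[of b] unfolding \<sigma>_def by auto
        next
          assume "a \<noteq> 0" "b = 0" then show ?thesis using a e p0r[of a] unfolding \<sigma>_def by auto
        qed simp
      qed
      show "\<sigma> ` {0..<?N} = {0..<?N}"
      proof -
        have "{0..<?N} = insert 0 {1..n}" by auto
        moreover have "\<sigma> ` {1..n} = p0 ` {1..n}" unfolding \<sigma>_def by auto
        moreover have "\<sigma> 0 = 0" unfolding \<sigma>_def by simp
        ultimately show ?thesis using img by simp
      qed
    qed
    then have "\<sigma> permutes {0..<?N}" by (rule bij_imp_permutes) (auto simp: \<sigma>_def)
    then show ?thesis by simp
  qed
  have Tsig: "\<exists>w. odd w \<and> T \<sigma> = c ^ n * w"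
  proof -
    define y where "y i = x (i + \<sigma> i) div c" for i
    have yi: "x (i + \<sigma> i) = c * y i \<and> odd (y i)" if i: "i \<in> {1..n}" for i
    proof -
      have pw: "is_power_of_two (i + \<sigma> i)" using p0r[OF i] i unfolding \<sigma>_def by simp
      have ge: "i + \<sigma> i \<ge> 1" using i by simp
      have e: "x (i + \<sigma> i) = c * y i" using cd[OF ge] unfolding y_def by simp
      have "\<not> 2 * c dvd x (i + \<sigma> i)" using c2d[OF ge] pw by simp
      then have "odd (y i)" using e by auto
      then show ?thesis using e by simp
    qed
    have "T \<sigma> = (\<Prod>i\<in>{1..n}. c * y i)" using split[of \<sigma>] yi assms(2) unfolding \<sigma>_def by simp
    also have "\<dots> = c ^ n * (\<Prod>i\<in>{1..n}. y i)" by (simp add: prod.distrib)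
    finally show ?thesis using yi by (intro exI[of _ "\<Prod>i\<in>{1..n}. y i"]) (simp add: even_prod_iff)
  qed
  then obtain w where o: "odd w" "T \<sigma> = c ^ n * w" by blast
  have other: "2 * c ^ n dvd T p" if p: "p \<in> ?S - {\<sigma>}" for p
  proof -
    have pp: "p permutes {0..<?N}" and ne: "p \<noteq> \<sigma>" using p by auto
    show ?thesis
    proof (cases "p 0 = 0")
      case False
      have "(\<Prod>i\<in>{0..<?N}. c) dvd T p" unfolding T_def
      proof (rule prod_dvd_prod)
        fix a assume "a \<in> {0..<?N}"
        have "a + p a \<ge> 1" using False by (cases a) auto
        then show "c dvd x (a + p a)" by (rule cd)
      qed
      then have "c ^ n * c dvd T p" by (simp add: mult.commute)
      moreover have "2 * c ^ n dvd c ^ n * c" using ev by (auto simp: mult.commute)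
      ultimately show ?thesis by (rule dvd_trans[rotated])
    next
      case True
      have "\<exists>j\<in>{1..n}. \<not> is_power_of_two (j + p j)"
      proof (rule ccontr)
        assume allp: "\<not> ?thesis"
        have inj: "inj p" using pp by (rule permutes_inj)
        have A: "p i \<in> {1..n} \<and> is_power_of_two (i + p i)" if i: "i \<in> {1..n}" for i
        proof -
          have "p i \<in> {0..<?N}" using permutes_in_image[OF pp] i by auto
          moreover have "p i \<noteq> 0" using True inj i by (metis injD not_one_le_zero atLeastAtMost_iff)
          ultimately show ?thesis using allp i by auto
        qed
        have B: "inj_on p {1..n}" using inj by (rule inj_on_subset) simp
        have "goodf n p" unfolding goodf_def using A B by blast
        then have "p i = \<sigma> i" for i
        proof -
          assume g: "goodf n p"
          show ?thesis
          proof (cases "i \<in> {1..n}")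
            case True then show ?thesis using goodf_unique[OF g p0 True] unfolding \<sigma>_def by simp
          next
            case F: False
            show ?thesis
            proof (cases "i = 0")
              case True then show ?thesis using \<open>p 0 = 0\<close> unfolding \<sigma>_def by simp
            next
              case False
              then have "i \<notin> {0..<?N}" using F by auto
              then show ?thesis using permutes_not_in[OF pp] F unfolding \<sigma>_def by simp
            qed
          qed
        qed
        then show False using ne by auto
      qed
      then obtain j where j: "j \<in> {1..n}" "\<not> is_power_of_two (j + p j)" by blast
      have "T p = (\<Prod>i\<in>{1..n}. x (i + p i))" using split[of p] True assms(2) by simp
      also have "\<dots> = x (j + p j) * (\<Prod>i\<in>{1..n}-{j}. x (i + p i))" using j by (simp add: prod.remove)
      finally have Te: "T p = x (j + p j) * (\<Prod>i\<in>{1..n}-{j}. x (i + p i))" .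
      have d1: "2 * c dvd x (j + p j)" using c2d[of "j + p j"] j by simp
      have "(\<Prod>i\<in>{1..n}-{j}. c) dvd (\<Prod>i\<in>{1..n}-{j}. x (i + p i))"
        by (rule prod_dvd_prod) (auto intro!: cd)
      then have d2: "c ^ (n - 1) dvd (\<Prod>i\<in>{1..n}-{j}. x (i + p i))" using j by simp
      have "2 * c * c ^ (n - 1) dvd T p" unfolding Te using d1 d2 by (rule mult_dvd_mono)
      moreover have "2 * c * c ^ (n - 1) = 2 * c ^ n" using j
      proof -
        have "n = Suc (n - 1)" using j by auto
        then have "c ^ n = c * c ^ (n - 1)" by (metis power_Suc)
        then show ?thesis by simp
      qed
      ultimately show ?thesis by metis
    qed
  qed
  define r where "r p = T p div (2 * c ^ n)" for p
  have rT: "T p = 2 * c ^ n * r p" if "p \<in> ?S - {\<sigma>}" for p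
    using other[OF that] unfolding r_def by simp
  have "det (hankel_mat x n) = signof \<sigma> * T \<sigma> + (\<Sum>p\<in>?S - {\<sigma>}. signof p * T p)"
    unfolding det using sum.remove[OF fin sperm] by simp
  also have "(\<Sum>p\<in>?S - {\<sigma>}. signof p * T p) = (\<Sum>p\<in>?S - {\<sigma>}. c ^ n * (2 * (signof p * r p)))"
    by (rule sum.cong) (auto simp: rT)
  also have "\<dots> = c ^ n * (2 * (\<Sum>p\<in>?S - {\<sigma>}. signof p * r p))"
    by (simp add: sum_distrib_left)
  finally have "det (hankel_mat x n) = c ^ n * (signof \<sigma> * w + 2 * (\<Sum>p\<in>?S - {\<sigma>}. signof p * r p))"
    using o by (simp add: algebra_simps)
  moreover have "odd (signof \<sigma> * w + 2 * (\<Sum>p\<in>?S - {\<sigma>}. signof p * r p))"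
    using o(1) by (cases \<sigma> rule: sign_cases) auto
  ultimately show "\<exists>m::int. odd m \<and> det (hankel_mat x n) = (2 * int k) ^ n * m"
    unfolding c_def by blast
qed

end
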